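(* Assume Dickson's conjecture. Then there are infinitely many positive integers $n$ such that $$r(n,n)\ge \frac{9}{8}-\frac{9}{8n}.$$
   Context: $\phi$ denotes Euler's totient function. For positive integers $a,b$, $c(a,b)$ is the least positive integer $c$ such that $\phi(a!)\,\phi(b!)$ divides $\phi(c!)$, and $r(a,b)=c(a,b)/(a+b)$. Dickson's conjecture: Let $a_1,\dots,a_k$ be integers and $b_1,\dots,b_k$ positive integers. If there is no prime $q$ such that $q$ divides $\prod_{i=1}^k(a_i+b_in)$ for every $n\in\{0,1,\dots,q-1\}$, then there are infinitely many positive integers $n$ for which $a_1+b_1n,\dots,a_k+b_kn$ are all prime. *)

theory Defs
  imports Complex_Main "HOL-Number_Theory.Number_Theory"
begin

definition c_fun :: "nat \<Rightarrow> nat \<Rightarrow> nat" where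
  "c_fun a b = (LEAST c. c > 0 \<and> totient (fact a) * totient (fact b) dvd totient (fact c))"

definition r_fun :: "nat \<Rightarrow> nat \<Rightarrow> real" where
  "r_fun a b = real (c_fun a b) / real (a + b)"

definition dickson_conjecture :: bool where
  "dickson_conjecture \<longleftrightarrow>
     (\<forall>(k::nat) (a::nat \<Rightarrow> int) (b::nat \<Rightarrow> int).
        (\<forall>i<k. b i > 0) \<longrightarrow>
        \<not> (\<exists>q::nat. prime q \<and> (\<forall>n<q. int q dvd (\<Prod>i<k. a i + b i * int n))) \<longrightarrow>
        infinite {n::nat. n > 0 \<and> (\<forall>i<k. prime (a i + b i * int n))})"

end

theory Submission
  imports Defs
begin

lemma mult_fact:
  fixes p :: nat
  assumes "prime p"
  shows "m < p^2 \<Longrightarrow> multiplicity p (fact m :: nat) = m div p"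
proof (induction m)
  case 0 then show ?case by simp
next
  case (Suc m)
  have p0: "p > 1" using assms prime_gt_1_nat by blast
  have ih: "multiplicity p (fact m :: nat) = m div p" using Suc by simp
  have "fact (Suc m) = (Suc m) * (fact m :: nat)" by simp
  hence "multiplicity p (fact (Suc m) :: nat) = multiplicity p (Suc m) + multiplicity p (fact m :: nat)"
    using prime_elem_multiplicity_mult_distrib[of p "Suc m" "fact m :: nat"] assms by simp
  moreover have "multiplicity p (Suc m) = (if Suc m mod p = 0 then 1 else 0)"
  proof (cases "Suc m mod p = 0")
    case True
    then obtain j where j: "Suc m = p * j" by blast
    have "j < p" using Suc.prems j by (simp add: power2_eq_square)
    moreover have "j > 0" using j by (cases j) auto
    ultimately have "\<not> p dvd j" using nat_dvd_not_less by blast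
    hence "multiplicity p j = 0" by (rule not_dvd_imp_multiplicity_0)
    moreover have "multiplicity p (p * j) = Suc (multiplicity p j)"
      using p0 \<open>j > 0\<close> multiplicity_times_same[where p=p and x=j] by simp
    ultimately show ?thesis using True j by simp
  next
    case False
    then show ?thesis by (simp add: not_dvd_imp_multiplicity_0 dvd_eq_mod_eq_0)
  qed
  ultimately show ?case using ih div_Suc[of m p] by auto
qed

lemma mult_phi:
  fixes p N :: nat
  assumes "prime p" "N > 0"
  shows "multiplicity p (totient N) =
    (\<Sum>q\<in>prime_factors N. (if q = p then multiplicity p N - 1 else 0) + multiplicity p (q - 1))"
proof -
  have "multiplicity p (totient N) = multiplicity p (\<Prod>q\<in>prime_factors N. q ^ (multiplicity q N - 1) * (q - 1))"
    using totient_formula1[OF assms(2)] by simp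
  also have "\<dots> = (\<Sum>q\<in>prime_factors N. multiplicity p (q ^ (multiplicity q N - 1) * (q - 1)))"
    apply (rule prime_elem_multiplicity_prod_distrib)
    using assms by (auto simp: in_prime_factors_iff dest!: prime_gt_1_nat)
  also have "\<dots> = (\<Sum>q\<in>prime_factors N. (if q = p then multiplicity p N - 1 else 0) + multiplicity p (q - 1))"
  proof (rule sum.cong[OF refl])
    fix q assume q: "q \<in> prime_factors N"
    hence qp: "prime q" by (auto simp: in_prime_factors_iff)
    hence q1: "q > 1" by (rule prime_gt_1_nat)
    have "multiplicity p (q ^ (multiplicity q N - 1) * (q - 1)) = multiplicity p (q ^ (multiplicity q N - 1)) + multiplicity p (q - 1)"
      using q1 assms by (intro prime_elem_multiplicity_mult_distrib) auto
    also have "multiplicity p (q ^ (multiplicity q N - 1)) = (multiplicity q N - 1) * multiplicity p q"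
      using q1 assms by (intro prime_elem_multiplicity_power_distrib) auto
    also have "multiplicity p q = (if q = p then 1 else 0)"
      using assms qp prime_multiplicity_other[of p q] multiplicity_self[of p] by (auto simp: prime_gt_1_nat)
    finally show "multiplicity p (q ^ (multiplicity q N - 1) * (q - 1)) = (if q = p then multiplicity p N - 1 else 0) + multiplicity p (q - 1)"
      by auto
  qed
  finally show ?thesis .
qed

lemma comp_nat: fixes q d :: nat assumes "prime q" "d dvd q" "1 < d" "d < q" shows False
  using assms prime_nat_iff by blast

lemma key_q:
  fixes m q :: nat
  assumes "prime q" "q < 18*(11 + 105*m)" "even m" "m > 0"
  shows "multiplicity (11 + 105*m) (q-1) \<le> (if q \<in> {2*(11 + 105*m)+1, 6*(11 + 105*m)+1, 8*(11 + 105*m)+1} then 1 else 0)"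
proof (cases "(11 + 105*m) dvd (q-1)")
  case False then show ?thesis by (simp add: not_dvd_imp_multiplicity_0)
next
  case True
  define p where "p = 11 + 105*m"
  then obtain j where j: "q - 1 = p * j" using True by blast
  have q2: "q \<ge> 2" using assms(1) prime_ge_2_nat by blast
  have "j > 0" using j q2 by (cases j) auto
  have "j < 18" using j q2 assms(2) proof -
    have "p * j < p * 18" using j q2 assms(2) unfolding p_def by linarith
    thus ?thesis by simp
  qed
  have qj: "q = (11+105*m)*j + 1" using j q2 p_def by simp
  have c: "\<not> (d dvd q \<and> 1 < d \<and> d < q)" for d using comp_nat[OF assms(1), of d] by blast
  have c2: "\<not> (2 dvd q \<and> 2 < q)" using c[of 2] by auto
  have c3: "\<not> (3 dvd q \<and> 3 < q)" using c[of 3] by auto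
  have c5: "\<not> (5 dvd q \<and> 5 < q)" using c[of 5] by auto
  have c7: "\<not> (7 dvd q \<and> 7 < q)" using c[of 7] by auto
  have mem: "q \<in> {2*(11 + 105*m)+1, 6*(11 + 105*m)+1, 8*(11 + 105*m)+1}"
  proof -
    have "j = 1 \<or> j = 2 \<or> j = 3 \<or> j = 4 \<or> j = 5 \<or> j = 6 \<or> j = 7 \<or> j = 8 \<or> j = 9 \<or> j = 10 \<or> j = 11 \<or> j = 12 \<or> j = 13 \<or> j = 14 \<or> j = 15 \<or> j = 16 \<or> j = 17" using \<open>j > 0\<close> \<open>j < 18\<close> by presburger
    then show ?thesis using qj c2 c3 c5 c7 assms(3)
    apply (elim disjE)
    by (simp_all)
  qed
  have "multiplicity p (p * j) = Suc (multiplicity p j)"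
    using \<open>j > 0\<close> p_def multiplicity_times_same[where p=p and x=j] by simp
  moreover have "multiplicity p j = 0"
  proof (rule not_dvd_imp_multiplicity_0)
    show "\<not> p dvd j"
    proof
      assume "p dvd j" hence "p \<le> j" using \<open>j>0\<close> by (rule dvd_imp_le)
      thus False using \<open>j<18\<close> p_def assms(4) by simp
    qed
  qed
  ultimately have "multiplicity p (q - 1) = 1" using j by simp
  then show ?thesis using mem p_def by simp
qed

lemma main_bound:
  fixes m :: nat
  defines "p \<equiv> 11 + 105*m"
  assumes m0: "m > 0" and pp: "prime p" and p2: "prime (2*p+1)" and p6: "prime (6*p+1)" and p8: "prime (8*p+1)"
  shows "c_fun (8*p+1) (8*p+1) \<ge> 18*p"
proof -
  have "odd p" using pp prime_odd_nat[of p] p_def by simp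
  hence em: "even m" using p_def by presburger
  have p116: "p \<ge> 116" using m0 p_def by simp
  have psq: "18 * p < p^2" using p116 by (simp add: power2_eq_square)
  define n where "n = 8*p+1"
  define N where "N = totient (fact n :: nat)"
  have N0: "N > 0" unfolding N_def by simp
  have low: "multiplicity p N \<ge> 10"
  proof -
    define f where "f q = (if q = p then multiplicity p (fact n :: nat) - 1 else 0) + multiplicity p (q - 1)" for q
    have eq: "multiplicity p N = (\<Sum>q\<in>prime_factors (fact n :: nat). f q)"
      unfolding N_def f_def by (rule mult_phi[OF pp]) simp
    have vn: "multiplicity p (fact n :: nat) = 8"
    proof -
      have "(1 + p*8) div p = 8 + 1 div p" using p116 by (intro div_mult_self2) simp
      hence nd: "n div p = 8" unfolding n_def using p116 by (simp add: add.commute mult.commute)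
      have "n < p^2" using psq p116 unfolding n_def by linarith
      thus ?thesis using mult_fact[OF pp, of n] nd by simp
    qed
    have sub: "{p, 2*p+1, 6*p+1, 8*p+1} \<subseteq> prime_factors (fact n :: nat)"
      using pp p2 p6 p8 unfolding n_def
      by (auto simp del: fact_Suc simp: in_prime_factors_iff prime_dvd_fact_iff)
    have "(\<Sum>q\<in>{p, 2*p+1, 6*p+1, 8*p+1}. f q) \<le> (\<Sum>q\<in>prime_factors (fact n :: nat). f q)"
      by (rule sum_mono2[OF _ sub]) auto
    moreover have "(\<Sum>q\<in>{p, 2*p+1, 6*p+1, 8*p+1}. f q) = f p + f (2*p+1) + f (6*p+1) + f (8*p+1)"
      using p116 by simp
    moreover have "f p \<ge> 7" using vn unfolding f_def by simp
    moreover have "f (k*p+1) \<ge> 1" if "k > 0" for k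
    proof -
      have "k*p \<noteq> 0" using that p116 by simp
      moreover have "\<not> is_unit p" using p116 by simp
      ultimately have "multiplicity p (k*p) > 0"
        using multiplicity_gt_zero_iff[where x="k*p" and p=p] by simp
      hence "multiplicity p ((k*p+1) - 1) > 0" by simp
      thus ?thesis unfolding f_def by simp
    qed
    ultimately have "f p \<ge> 7" "f (2*p+1) \<ge> 1" "f (6*p+1) \<ge> 1" "f (8*p+1) \<ge> 1"
      "(\<Sum>q\<in>{p, 2*p+1, 6*p+1, 8*p+1}. f q) \<le> (\<Sum>q\<in>prime_factors (fact n :: nat). f q)"
      "(\<Sum>q\<in>{p, 2*p+1, 6*p+1, 8*p+1}. f q) = f p + f (2*p+1) + f (6*p+1) + f (8*p+1)"
      by auto
    thus ?thesis using eq by linarith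
  qed
  have up: "multiplicity p (totient (fact c :: nat)) \<le> 19" if c: "c > 0" "c < 18*p" for c
  proof -
    define A where "A = prime_factors (fact c :: nat)"
    define T where "T = {2*p+1, 6*p+1, 8*p+1}"
    have finA: "finite A" unfolding A_def by simp
    have eq: "multiplicity p (totient (fact c :: nat)) = (\<Sum>q\<in>A. (if q = p then multiplicity p (fact c :: nat) - 1 else 0) + multiplicity p (q - 1))"
      unfolding A_def by (rule mult_phi[OF pp]) simp
    have vc: "multiplicity p (fact c :: nat) = c div p"
      using mult_fact[OF pp, of c] psq c by simp
    have "c div p < 18" using c p116 by (simp add: div_less_iff_less_mult)
    hence vc17: "multiplicity p (fact c :: nat) - 1 \<le> 16" using vc by simp
    have "(\<Sum>q\<in>A. (if q = p then multiplicity p (fact c :: nat) - 1 else 0) + multiplicity p (q - 1))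
        \<le> (\<Sum>q\<in>A. (if q = p then 16 else 0) + (if q \<in> T then 1 else 0))"
    proof (rule sum_mono)
      fix q assume q: "q \<in> A"
      hence qp: "prime q" and qc: "q \<le> c" using A_def by (auto simp: in_prime_factors_iff prime_dvd_fact_iff)
      have "multiplicity p (q - 1) \<le> (if q \<in> T then 1 else 0)"
        using key_q[OF qp _ em m0] qc c unfolding T_def p_def by simp
      thus "(if q = p then multiplicity p (fact c :: nat) - 1 else 0) + multiplicity p (q - 1)
          \<le> (if q = p then 16 else 0) + (if q \<in> T then 1 else 0)"
        using vc17 by auto
    qed
    also have "\<dots> = (\<Sum>q\<in>A. (if q = p then 16 else 0)) + (\<Sum>q\<in>A. (if q \<in> T then 1 else 0))"
      by (rule sum.distrib)
    also have "(\<Sum>q\<in>A. (if q = p then 16 else 0)) \<le> (16::nat)"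
      using finA by (simp add: sum.delta)
    also have "(\<Sum>q\<in>A. (if q \<in> T then 1 else 0)) = card (A \<inter> T)"
      using finA by (simp add: sum.If_cases Int_def)
    also have "card (A \<inter> T) \<le> 3"
    proof -
      have "card (A \<inter> T) \<le> card T" by (rule card_mono) (auto simp: T_def)
      also have "card T \<le> 3" unfolding T_def by (auto simp: card_insert_if)
      finally show ?thesis .
    qed
    finally show ?thesis using eq by simp
  qed
  define P where "P c = (c > 0 \<and> N * N dvd totient (fact c :: nat))" for c
  have ex: "P ((N*N)^2)"
  proof -
    have "totient ((N*N)^2) = (N*N) * totient (N*N)" by (simp add: totient_power)
    hence "N*N dvd totient ((N*N)^2)" by simp
    moreover have "(N*N)^2 dvd (fact ((N*N)^2) :: nat)" using N0 by (intro dvd_fact) auto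
    hence "totient ((N*N)^2) dvd totient (fact ((N*N)^2) :: nat)" by (rule totient_dvd)
    ultimately show ?thesis unfolding P_def using N0 by (auto intro: dvd_trans)
  qed
  have cfeq: "c_fun n n = (LEAST c. P c)" unfolding c_fun_def P_def N_def by simp
  have PL: "P (c_fun n n)" unfolding cfeq by (rule LeastI[of P, OF ex])
  show ?thesis
  proof (rule ccontr)
    assume "\<not> 18 * p \<le> c_fun (8 * p + 1) (8 * p + 1)"
    hence lt: "c_fun n n < 18*p" unfolding n_def by simp
    have pos: "c_fun n n > 0" and dv: "N * N dvd totient (fact (c_fun n n) :: nat)" using PL unfolding P_def by auto
    have "multiplicity p (N * N) \<le> multiplicity p (totient (fact (c_fun n n) :: nat))"
      by (rule dvd_imp_multiplicity_le[OF dv]) simp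
    moreover have "multiplicity p (N * N) = multiplicity p N + multiplicity p N"
      using N0 pp by (intro prime_elem_multiplicity_mult_distrib) auto
    ultimately show False using up[OF pos lt] low by simp
  qed
qed


theorem theorem1p4:
  assumes "dickson_conjecture"
  shows "infinite {n::nat. n > 0 \<and> r_fun n n \<ge> 9/8 - 9 / (8 * real n)}"
proof -
  define a :: "nat \<Rightarrow> int" where "a i = (if i = 0 then 11 else if i = 1 then 23 else if i = 2 then 67 else 89)" for i
  define b :: "nat \<Rightarrow> int" where "b i = (if i = 0 then 105 else if i = 1 then 210 else if i = 2 then 630 else 840)" for i
  have bpos: "\<forall>i<4. b i > 0" by (simp add: b_def)
  have prodeq: "(\<Prod>i<4. a i + b i * int n) = (11 + 105 * int n) * (23 + 210 * int n) * (67 + 630 * int n) * (89 + 840 * int n)" for n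
    by (simp add: a_def b_def numeral_eq_Suc lessThan_Suc)
  have adm: "\<not> (\<exists>q::nat. prime q \<and> (\<forall>n<q. int q dvd (\<Prod>i<4. a i + b i * int n)))"
  proof
    assume "\<exists>q::nat. prime q \<and> (\<forall>n<q. int q dvd (\<Prod>i<4. a i + b i * int n))"
    then obtain q :: nat where q: "prime q" "\<forall>n<q. int q dvd (\<Prod>i<4. a i + b i * int n)" by blast
    have q2: "q \<ge> 2" using q(1) prime_ge_2_nat by blast
    have d0: "int q dvd 1508639" using q(2)[rule_format, of 0] q2 prodeq[of 0] by simp
    have d1: "int q dvd 17500981364" using q(2)[rule_format, of 1] q2 prodeq[of 1] by simp
    have "int q dvd 5616757991 * 1508639 + (-484182) * 17500981364"
      using d0 d1 by (intro dvd_add dvd_mult) auto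
    hence "int q dvd 1" by simp
    hence "q = 1" by simp
    thus False using q2 by simp
  qed
  have infA: "infinite {n::nat. n > 0 \<and> (\<forall>i<4. prime (a i + b i * int n))}"
    using assms bpos adm unfolding dickson_conjecture_def by blast
  define A where "A = {n::nat. n > 0 \<and> (\<forall>i<4. prime (a i + b i * int n))}"
  define g where "g m = 8 * (11 + 105 * m) + 1" for m :: nat
  have inj: "inj g" unfolding g_def by (auto intro: injI)
  have infg: "infinite (g ` A)" using infA unfolding A_def[symmetric]
    using finite_imageD[of g A] inj_on_subset[OF inj subset_UNIV] by blast
  have "g ` A \<subseteq> {n::nat. n > 0 \<and> r_fun n n \<ge> 9/8 - 9 / (8 * real n)}"
  proof
    fix x assume "x \<in> g ` A"
    then obtain m where m: "m \<in> A" "x = g m" by blast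
    define p where "p = 11 + 105 * m"
    have m0: "m > 0" and pr: "\<forall>i<4. prime (a i + b i * int m)" using m(1) unfolding A_def by auto
    have e0: "a 0 + b 0 * int m = int p" by (simp add: a_def b_def p_def)
    have e1: "a 1 + b 1 * int m = int (2*p+1)" by (simp add: a_def b_def p_def)
    have e2: "a 2 + b 2 * int m = int (6*p+1)" by (simp add: a_def b_def p_def)
    have e3: "a 3 + b 3 * int m = int (8*p+1)" by (simp add: a_def b_def p_def)
    have pp: "prime p" using pr[rule_format, of 0] e0 by simp
    have "prime (a 1 + b 1 * int m)" using pr by simp
    hence "prime (int (2*p+1))" by (simp only: e1)
    hence p2: "prime (2*p+1)" by (simp only: prime_nat_int_transfer)
    have "prime (a 2 + b 2 * int m)" using pr by simp
    hence "prime (int (6*p+1))" by (simp only: e2)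
    hence p6: "prime (6*p+1)" by (simp only: prime_nat_int_transfer)
    have "prime (a 3 + b 3 * int m)" using pr by simp
    hence "prime (int (8*p+1))" by (simp only: e3)
    hence p8: "prime (8*p+1)" by (simp only: prime_nat_int_transfer)
    have cb: "c_fun (8*p+1) (8*p+1) \<ge> 18*p"
      using main_bound[OF m0] pp p2 p6 p8 unfolding p_def by simp
    have x: "x = 8*p+1" using m(2) unfolding g_def p_def by simp
    have "9/8 - 9 / (8 * real x) = 9 * real p / real x" unfolding x by (simp add: field_simps)
    also have "\<dots> = real (18*p) / real (x + x)" unfolding x by (simp add: field_simps)
    also have "\<dots> \<le> real (c_fun x x) / real (x + x)"
      using cb x by (intro divide_right_mono) auto
    finally show "x \<in> {n::nat. n > 0 \<and> r_fun n n \<ge> 9/8 - 9 / (8 * real n)}"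
      unfolding r_fun_def using x by simp
  qed
  thus ?thesis using infg infinite_super by blast
qed

end
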